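(* Every straight domain is locally divided.
   Context: All rings are commutative with identity. An overring of a domain $A$ is a ring $B$ with $A\subseteq B\subseteq \operatorname{Frac}(A)$. A prime ideal $\mathfrak{p}$ of a domain $A$ is straight if for every overring $B$ of $A$, the $(A/\mathfrak{p})$-module $B/\mathfrak{p}B$ is torsion-free; $A$ is a straight domain if all its prime ideals are straight. A domain $A$ is divided if $\mathfrak{p}=\mathfrak{p}A_\mathfrak{p}$ for every prime ideal $\mathfrak{p}$, and locally divided if $A_\mathfrak{m}$ is divided for every maximal ideal $\mathfrak{m}$ of $A$. *)

theory Defs
  imports "HOL-Computational_Algebra.Polynomial_Factorial"
begin

text \<open>All rings considered are subrings of a field 'k (commutative with identity).
  A domain A is identified with its image in its fraction field 'a fract.\<close>

definition subring_of :: "'k::field set \<Rightarrow> bool" where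
  "subring_of R \<longleftrightarrow> 0 \<in> R \<and> 1 \<in> R \<and>
     (\<forall>x\<in>R. \<forall>y\<in>R. x + y \<in> R \<and> x - y \<in> R \<and> x * y \<in> R)"

definition ideal_of :: "'k::field set \<Rightarrow> 'k set \<Rightarrow> bool" where
  "ideal_of R I \<longleftrightarrow> I \<subseteq> R \<and> 0 \<in> I \<and>
     (\<forall>x\<in>I. \<forall>y\<in>I. x + y \<in> I) \<and> (\<forall>r\<in>R. \<forall>x\<in>I. r * x \<in> I)"

definition prime_ideal_of :: "'k::field set \<Rightarrow> 'k set \<Rightarrow> bool" where
  "prime_ideal_of R P \<longleftrightarrow> ideal_of R P \<and> 1 \<notin> P \<and>
     (\<forall>x\<in>R. \<forall>y\<in>R. x * y \<in> P \<longrightarrow> x \<in> P \<or> y \<in> P)"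

definition maximal_ideal_of :: "'k::field set \<Rightarrow> 'k set \<Rightarrow> bool" where
  "maximal_ideal_of R M \<longleftrightarrow> ideal_of R M \<and> M \<noteq> R \<and>
     (\<forall>I. ideal_of R I \<and> M \<subseteq> I \<longrightarrow> I = M \<or> I = R)"

definition ideal_ext :: "'k::field set \<Rightarrow> 'k set \<Rightarrow> 'k set" where
  "ideal_ext I B = \<Inter>{J. ideal_of B J \<and> I \<subseteq> J}"

definition frac_of :: "'k::field set \<Rightarrow> 'k set" where
  "frac_of R = {x / y | x y. x \<in> R \<and> y \<in> R \<and> y \<noteq> 0}"

definition overring_of :: "'k::field set \<Rightarrow> 'k set \<Rightarrow> bool" where
  "overring_of R B \<longleftrightarrow> subring_of B \<and> R \<subseteq> B \<and> B \<subseteq> frac_of R"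

definition localize :: "'k::field set \<Rightarrow> 'k set \<Rightarrow> 'k set" where
  "localize R P = {a / s | a s. a \<in> R \<and> s \<in> R \<and> s \<notin> P}"

text \<open>B / P B is a torsion-free (R/P)-module: a nonzero class of R/P
  (i.e. an element a of R - P) kills no nonzero class of B / PB.\<close>
definition torsion_free_quot :: "'k::field set \<Rightarrow> 'k set \<Rightarrow> 'k set \<Rightarrow> bool" where
  "torsion_free_quot R P B \<longleftrightarrow>
     (\<forall>a\<in>R - P. \<forall>b\<in>B. a * b \<in> ideal_ext P B \<longrightarrow> b \<in> ideal_ext P B)"

definition straight_prime :: "'k::field set \<Rightarrow> 'k set \<Rightarrow> bool" where
  "straight_prime R P \<longleftrightarrow> (\<forall>B. overring_of R B \<longrightarrow> torsion_free_quot R P B)"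

definition straight :: "'k::field set \<Rightarrow> bool" where
  "straight R \<longleftrightarrow> (\<forall>P. prime_ideal_of R P \<longrightarrow> straight_prime R P)"

definition divided :: "'k::field set \<Rightarrow> bool" where
  "divided R \<longleftrightarrow> (\<forall>P. prime_ideal_of R P \<longrightarrow> P = ideal_ext P (localize R P))"

definition locally_divided :: "'k::field set \<Rightarrow> bool" where
  "locally_divided R \<longleftrightarrow> (\<forall>M. maximal_ideal_of R M \<longrightarrow> divided (localize R M))"

definition straight_domain :: "'a::idom itself \<Rightarrow> bool" where
  "straight_domain _ \<longleftrightarrow> straight (range (to_fract :: 'a \<Rightarrow> 'a fract))"

definition locally_divided_domain :: "'a::idom itself \<Rightarrow> bool" where
  "locally_divided_domain _ \<longleftrightarrow> locally_divided (range (to_fract :: 'a \<Rightarrow> 'a fract))"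

end

theory Submission imports Defs begin

definition addsub :: "'k::field set \<Rightarrow> bool" where
  "addsub C \<longleftrightarrow> 0 \<in> C \<and> (\<forall>x\<in>C. \<forall>y\<in>C. x + y \<in> C)"

definition pc :: "'k::field set \<Rightarrow> 'k poly \<Rightarrow> bool" where
  "pc C f \<longleftrightarrow> (\<forall>i. coeff f i \<in> C)"

definition Vs :: "'k::field set \<Rightarrow> 'k \<Rightarrow> nat \<Rightarrow> 'k set" where
  "Vs S u j = {poly g u | g. pc S g \<and> (\<forall>i>j. coeff g i = 0)}"

lemma addsub_sum:
  assumes "addsub C" "\<forall>i\<in>A. f i \<in> C"
  shows "sum f A \<in> C"
  using assms(2)
proof (induct A rule: infinite_finite_induct)
  case (infinite A) then show ?case using assms(1) by (simp add: addsub_def)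
next
  case empty then show ?case using assms(1) by (simp add: addsub_def)
next
  case (insert x F) then show ?case using assms(1) by (simp add: addsub_def)
qed

lemma pc_add: "addsub C \<Longrightarrow> pc C f \<Longrightarrow> pc C g \<Longrightarrow> pc C (f + g)"
  by (simp add: pc_def addsub_def)

lemma pc_mult:
  assumes "addsub C" "\<forall>a\<in>A. \<forall>c\<in>C. a * c \<in> C" "pc A f" "pc C g"
  shows "pc C (f * g)"
  unfolding pc_def coeff_mult
  using assms by (auto simp: pc_def intro!: addsub_sum)

lemma pc_smult: "\<forall>c\<in>C. a * c \<in> C \<Longrightarrow> pc C g \<Longrightarrow> pc C (smult a g)"
  by (simp add: pc_def)

lemma pc_const: "c \<in> C \<Longrightarrow> 0 \<in> C \<Longrightarrow> pc C [:c:]"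
  by (simp add: pc_def coeff_pCons split: nat.split)

lemma pc_monom: "c \<in> C \<Longrightarrow> 0 \<in> C \<Longrightarrow> pc C (monom c n)"
  by (simp add: pc_def coeff_monom)

lemma pc_mono: "C \<subseteq> D \<Longrightarrow> pc C f \<Longrightarrow> pc D f"
  by (auto simp: pc_def)

lemma Vs_add: assumes "addsub S" "x \<in> Vs S u j" "y \<in> Vs S u j" shows "x + y \<in> Vs S u j"
proof -
  obtain g where g: "x = poly g u" "pc S g" "\<forall>i>j. coeff g i = 0" using assms(2) unfolding Vs_def by blast
  obtain h where h: "y = poly h u" "pc S h" "\<forall>i>j. coeff h i = 0" using assms(3) unfolding Vs_def by blast
  have "x + y = poly (g + h) u" "pc S (g + h)" "\<forall>i>j. coeff (g + h) i = 0"
    using g h assms(1) by (auto simp: pc_add)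
  then show ?thesis unfolding Vs_def by blast
qed

lemma Vs_0: assumes "0 \<in> S" shows "0 \<in> Vs S u j"
proof -
  have "(0::'a) = poly 0 u" "pc S 0" "\<forall>i>j. coeff (0::'a poly) i = 0" using assms by (auto simp: pc_def)
  then show ?thesis unfolding Vs_def by blast
qed

lemma Vs_scale: assumes "\<forall>c\<in>C. a * c \<in> C" "x \<in> Vs C u j" shows "a * x \<in> Vs C u j"
proof -
  obtain g where g: "x = poly g u" "pc C g" "\<forall>i>j. coeff g i = 0" using assms(2) unfolding Vs_def by blast
  have "a * x = poly (smult a g) u" "pc C (smult a g)" "\<forall>i>j. coeff (smult a g) i = 0"
    using g assms(1) by (auto simp: pc_smult)
  then show ?thesis unfolding Vs_def by blast
qed

lemma Vs_sum: "addsub S \<Longrightarrow> \<forall>i\<in>A. f i \<in> Vs S u j \<Longrightarrow> sum f A \<in> Vs S u j"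
  by (rule addsub_sum) (auto simp: addsub_def Vs_add Vs_0)

locale nak =
  fixes S C :: "'k::field set"
  assumes aS: "addsub S" and mS: "\<forall>x\<in>S. \<forall>y\<in>S. x * y \<in> S" and oS: "1 \<in> S"
    and CS: "C \<subseteq> S" and aC: "addsub C" and SC: "\<forall>x\<in>S. \<forall>c\<in>C. x * c \<in> C"
    and inv: "\<forall>c\<in>C. \<exists>e\<in>S. e * (1 - c) = 1"
begin

lemma zS: "0 \<in> S" using aS by (simp add: addsub_def)

lemma L2:
  assumes "j \<ge> 1" "u ^ j = poly g u" "pc C g" "\<forall>i>j. coeff g i = 0"
  shows "u ^ j \<in> Vs S u (j - 1)"
proof -
  define c where "c = coeff g j"
  have c: "c \<in> C" using assms(3) by (simp add: pc_def c_def)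
  then obtain e where e: "e \<in> S" "e * (1 - c) = 1" using inv by blast
  define g' where "g' = g - monom c j"
  have "poly g' u = (1 - c) * u ^ j" using assms(2) by (simp add: g'_def poly_monom algebra_simps)
  then have "poly (smult e g') u = u ^ j" using e by (simp add: mult.assoc[symmetric])
  moreover have "pc S (smult e g')"
    using assms(3) CS e mS zS by (auto simp: pc_def g'_def coeff_monom c_def)
  moreover have "\<forall>i>j-1. coeff (smult e g') i = 0"
    using assms(1,4) by (auto simp: g'_def coeff_monom c_def)
  ultimately have "u ^ j = poly (smult e g') u \<and> pc S (smult e g') \<and> (\<forall>i>j-1. coeff (smult e g') i = 0)" by simp
  then show ?thesis unfolding Vs_def by blast
qed

lemma L1:
  assumes "u ^ Suc j \<in> Vs S u j"
  shows "u ^ k \<in> Vs S u j"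
proof (induct k)
  case 0
  have "pc S 1" using oS zS by (simp add: pc_def coeff_1)
  then show ?case unfolding Vs_def by (intro CollectI exI[of _ 1]) auto
next
  case (Suc k)
  obtain g where g: "u ^ k = poly g u" "pc S g" "\<forall>i>j. coeff g i = 0"
    using Suc unfolding Vs_def by blast
  obtain h where h: "u ^ Suc j = poly h u" "pc S h" "\<forall>i>j. coeff h i = 0"
    using assms unfolding Vs_def by blast
  define g' where "g' = g - monom (coeff g j) j"
  define f where "f = pCons 0 g' + smult (coeff g j) h"
  have "poly f u = u * (poly g u - coeff g j * u ^ j) + coeff g j * u ^ Suc j"
    using h by (simp add: f_def g'_def poly_monom)
  also have "\<dots> = u ^ Suc k" using g by (simp add: algebra_simps)
  finally have 1: "u ^ Suc k = poly f u" ..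
  have "pc S (pCons 0 g')"
    using g zS unfolding pc_def g'_def by (auto simp: coeff_pCons coeff_monom split: nat.split)
  moreover have "pc S (smult (coeff g j) h)"
    using g h mS by (intro pc_smult) (auto simp: pc_def)
  ultimately have 2: "pc S f" using aS by (simp add: f_def pc_add)
  have 3: "\<forall>i>j. coeff f i = 0"
    using g h by (auto simp: f_def g'_def coeff_pCons coeff_monom split: nat.split)
  show ?case using 1 2 3 unfolding Vs_def by blast
qed

lemma L3:
  assumes "\<forall>k. u ^ k \<in> Vs S u j" "pc C h"
  shows "poly h u \<in> Vs C u j"
proof -
  have "poly h u = (\<Sum>i\<le>degree h. coeff h i * u ^ i)" by (rule poly_altdef)
  also have "\<dots> \<in> Vs C u j"
  proof (rule Vs_sum[OF aC], intro ballI)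
    fix i
    obtain g where g: "u ^ i = poly g u" "pc S g" "\<forall>i>j. coeff g i = 0"
      using assms(1) unfolding Vs_def by blast
    have "pc C (smult (coeff h i) g)"
      using g assms(2) SC unfolding pc_def by (auto simp: mult.commute)
    then show "coeff h i * u ^ i \<in> Vs C u j"
      using g unfolding Vs_def by (intro CollectI exI[of _ "smult (coeff h i) g"]) auto
  qed
  finally show ?thesis .
qed

lemma main:
  assumes H2: "\<forall>j. \<exists>h. pc C h \<and> u ^ Suc j = poly h u"
  shows "u ^ Suc j \<in> Vs S u j \<Longrightarrow> u \<in> S"
proof (induct j)
  case 0
  then obtain g where g: "u = poly g u" "pc S g" "\<forall>i>0. coeff g i = 0"
    unfolding Vs_def by auto
  then have "degree g = 0" using degree_le[of 0 g] by simp
  then have "u = coeff g 0" using g(1) poly_altdef[of g u] by simp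
  then show ?case using g(2) by (simp add: pc_def)
next
  case (Suc j)
  have all: "\<forall>k. u ^ k \<in> Vs S u (Suc j)" using L1 Suc(2) by blast
  obtain h where h: "pc C h" "u ^ Suc j = poly h u" using H2 by blast
  have "u ^ Suc j \<in> Vs C u (Suc j)" using L3[OF all h(1)] h(2) by simp
  then obtain g where "u ^ Suc j = poly g u" "pc C g" "\<forall>i>Suc j. coeff g i = 0"
    unfolding Vs_def by blast
  then have "u ^ Suc j \<in> Vs S u j" using L2[of "Suc j" u g] by simp
  then show ?case by (rule Suc(1))
qed

lemma core:
  assumes "u ^ d = poly g0 u" "pc C g0" "\<forall>i>d. coeff g0 i = 0" "d \<ge> 1"
    and H2: "\<forall>j. \<exists>h. pc C h \<and> u ^ Suc j = poly h u"
  shows "u \<in> S"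
proof -
  have "u ^ d \<in> Vs S u (d - 1)" using L2 assms by blast
  then have "u ^ Suc (d - 1) \<in> Vs S u (d - 1)" using assms(4) by simp
  then show ?thesis using main[OF H2] by blast
qed

end


lemma ideal_ext_mult: "p \<in> P \<Longrightarrow> b \<in> B \<Longrightarrow> b * p \<in> ideal_ext P B"
  by (auto simp: ideal_ext_def ideal_of_def)

lemma ideal_ext_le: "ideal_of B T \<Longrightarrow> P \<subseteq> T \<Longrightarrow> ideal_ext P B \<subseteq> T"
  by (auto simp: ideal_ext_def)

lemma st_use:
  assumes "straight R" "prime_ideal_of R P" "overring_of R B" "a \<in> R" "a \<notin> P" "b \<in> B"
    "a * b \<in> ideal_ext P B"
  shows "b \<in> ideal_ext P B"
  using assms by (auto simp: straight_def straight_prime_def torsion_free_quot_def)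

definition Bset :: "'k::field set \<Rightarrow> 'k \<Rightarrow> 'k set" where
  "Bset R u = {poly f u | f. pc R f}"

lemma subring_addsub: "subring_of R \<Longrightarrow> addsub R"
  by (simp add: subring_of_def addsub_def)

lemma ideal_addsub: "ideal_of R I \<Longrightarrow> addsub I"
  by (simp add: ideal_of_def addsub_def)

lemma Bset_subring:
  assumes R: "subring_of R"
  shows "subring_of (Bset R u)"
proof -
  have aR: "addsub R" using R by (rule subring_addsub)
  have mR: "\<forall>a\<in>R. \<forall>c\<in>R. a * c \<in> R" using R by (simp add: subring_of_def)
  have "0 \<in> Bset R u" unfolding Bset_def
    using R by (intro CollectI exI[of _ 0]) (simp add: pc_def subring_of_def)
  moreover have "1 \<in> Bset R u" unfolding Bset_def
    using R by (intro CollectI exI[of _ 1]) (simp add: pc_def subring_of_def coeff_1)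
  moreover have "x + y \<in> Bset R u \<and> x - y \<in> Bset R u \<and> x * y \<in> Bset R u"
    if xy: "x \<in> Bset R u" "y \<in> Bset R u" for x y
  proof -
    obtain f g where fg: "x = poly f u" "pc R f" "y = poly g u" "pc R g"
      using xy unfolding Bset_def by blast
    have "pc R (f + g)" using fg aR by (simp add: pc_add)
    moreover have "pc R (f - g)" using fg R by (simp add: pc_def subring_of_def)
    moreover have "pc R (f * g)" using fg aR mR by (simp add: pc_mult)
    ultimately show ?thesis unfolding Bset_def using fg
      by (metis (mono_tags, lifting) mem_Collect_eq poly_add poly_diff poly_mult)
  qed
  ultimately show ?thesis unfolding subring_of_def by blast
qed

lemma Bset_overring:
  assumes R: "subring_of R" and fr: "\<And>x. x \<in> frac_of R"
  shows "overring_of R (Bset R u)"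
proof -
  have "R \<subseteq> Bset R u"
  proof
    fix r assume "r \<in> R"
    then have "r = poly [:r:] u" "pc R [:r:]" using R by (auto simp: pc_const subring_of_def)
    then show "r \<in> Bset R u" unfolding Bset_def by blast
  qed
  then show ?thesis using Bset_subring[OF R] fr by (auto simp: overring_of_def)
qed

lemma Bset_ideal:
  assumes R: "subring_of R" and P: "ideal_of R P"
  shows "ideal_ext P (Bset R u) \<subseteq> Bset P u"
proof (rule ideal_ext_le)
  have aP: "addsub P" using P by (rule ideal_addsub)
  have PR: "P \<subseteq> R" using P by (simp add: ideal_of_def)
  have mP: "\<forall>a\<in>R. \<forall>c\<in>P. a * c \<in> P" using P by (simp add: ideal_of_def)
  show "P \<subseteq> Bset P u"
  proof
    fix r assume "r \<in> P"
    then have "r = poly [:r:] u" "pc P [:r:]" using P by (auto simp: pc_const ideal_of_def)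
    then show "r \<in> Bset P u" unfolding Bset_def by blast
  qed
  have "Bset P u \<subseteq> Bset R u" using pc_mono[OF PR] unfolding Bset_def by blast
  moreover have "0 \<in> Bset P u" unfolding Bset_def
    using P by (intro CollectI exI[of _ 0]) (simp add: pc_def ideal_of_def)
  moreover have "x + y \<in> Bset P u" if xy: "x \<in> Bset P u" "y \<in> Bset P u" for x y
  proof -
    obtain f g where fg: "x = poly f u" "pc P f" "y = poly g u" "pc P g"
      using xy unfolding Bset_def by blast
    have "pc P (f + g)" using fg aP by (simp add: pc_add)
    then show ?thesis unfolding Bset_def using fg
      by (metis (mono_tags, lifting) mem_Collect_eq poly_add)
  qed
  moreover have "r * x \<in> Bset P u" if xy: "r \<in> Bset R u" "x \<in> Bset P u" for r x
  proof -
    obtain f g where fg: "r = poly f u" "pc R f" "x = poly g u" "pc P g"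
      using xy unfolding Bset_def by blast
    have "pc P (f * g)" using fg aP mP by (simp add: pc_mult)
    then show ?thesis unfolding Bset_def using fg
      by (metis (mono_tags, lifting) mem_Collect_eq poly_mult)
  qed
  ultimately show "ideal_of (Bset R u) (Bset P u)" unfolding ideal_of_def by blast
qed

lemma Bset_var: "subring_of R \<Longrightarrow> u \<in> Bset R u"
proof -
  assume R: "subring_of R"
  have "u = poly [:0, 1:] u" by simp
  moreover have "pc R [:0, 1:]" using R by (simp add: pc_def subring_of_def coeff_pCons split: nat.split)
  ultimately show ?thesis unfolding Bset_def by blast
qed

lemma Bset_one: "subring_of R \<Longrightarrow> 1 \<in> Bset R u"
  using Bset_subring by (auto simp: subring_of_def)


definition mloc :: "'k::field set \<Rightarrow> 'k set \<Rightarrow> 'k set" where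
  "mloc R M = {a / s | a s. a \<in> M \<and> s \<in> R \<and> s \<notin> M}"

lemma loc_intro: "a \<in> R \<Longrightarrow> s \<in> R \<Longrightarrow> s \<notin> M \<Longrightarrow> a / s \<in> localize R M"
  by (auto simp: localize_def)

lemma mloc_intro: "a \<in> M \<Longrightarrow> s \<in> R \<Longrightarrow> s \<notin> M \<Longrightarrow> a / s \<in> mloc R M"
  by (auto simp: mloc_def)

locale lsetup =
  fixes R M :: "'k::field set"
  assumes R: "subring_of R" and M: "prime_ideal_of R M"
begin

lemma M0: "0 \<in> M" using M by (simp add: prime_ideal_of_def ideal_of_def)
lemma M1: "1 \<notin> M" using M by (simp add: prime_ideal_of_def)
lemma MR: "M \<subseteq> R" using M by (simp add: prime_ideal_of_def ideal_of_def)
lemma Madd: "x \<in> M \<Longrightarrow> y \<in> M \<Longrightarrow> x + y \<in> M" using M by (simp add: prime_ideal_of_def ideal_of_def)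
lemma Mmul: "r \<in> R \<Longrightarrow> x \<in> M \<Longrightarrow> r * x \<in> M" using M by (simp add: prime_ideal_of_def ideal_of_def)
lemma Mprime: "x \<in> R \<Longrightarrow> y \<in> R \<Longrightarrow> x \<notin> M \<Longrightarrow> y \<notin> M \<Longrightarrow> x * y \<notin> M"
  using M by (auto simp: prime_ideal_of_def)
lemma nz: "s \<notin> M \<Longrightarrow> s \<noteq> 0" using M0 by auto
lemma R0: "0 \<in> R" and R1: "1 \<in> R" using R by (auto simp: subring_of_def)
lemma Radd: "x \<in> R \<Longrightarrow> y \<in> R \<Longrightarrow> x + y \<in> R" using R by (auto simp: subring_of_def)
lemma Rdiff: "x \<in> R \<Longrightarrow> y \<in> R \<Longrightarrow> x - y \<in> R" using R by (auto simp: subring_of_def)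
lemma Rmul: "x \<in> R \<Longrightarrow> y \<in> R \<Longrightarrow> x * y \<in> R" using R by (auto simp: subring_of_def)

abbreviation "S \<equiv> localize R M"

lemma RS: "r \<in> R \<Longrightarrow> r \<in> S"
  using loc_intro[of r R 1 M] R1 M1 by simp

lemma S_add: assumes "x \<in> S" "y \<in> S" shows "x + y \<in> S"
proof -
  obtain a s b s' where x: "x = a / s" "a \<in> R" "s \<in> R" "s \<notin> M"
    and y: "y = b / s'" "b \<in> R" "s' \<in> R" "s' \<notin> M"
    using assms by (auto simp: localize_def)
  have "x + y = (a * s' + b * s) / (s * s')" using x y nz by (simp add: field_simps)
  then show ?thesis using x y by (metis loc_intro Mprime Radd Rmul)
qed

lemma S_mul: assumes "x \<in> S" "y \<in> S" shows "x * y \<in> S"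
proof -
  obtain a s b s' where x: "x = a / s" "a \<in> R" "s \<in> R" "s \<notin> M"
    and y: "y = b / s'" "b \<in> R" "s' \<in> R" "s' \<notin> M"
    using assms by (auto simp: localize_def)
  have "x * y = (a * b) / (s * s')" by (simp add: x(1) y(1))
  then show ?thesis using x y by (metis loc_intro Mprime Rmul)
qed

lemma S_diff: assumes "x \<in> S" "y \<in> S" shows "x - y \<in> S"
proof -
  obtain a s b s' where x: "x = a / s" "a \<in> R" "s \<in> R" "s \<notin> M"
    and y: "y = b / s'" "b \<in> R" "s' \<in> R" "s' \<notin> M"
    using assms by (auto simp: localize_def)
  have "x - y = (a * s' - b * s) / (s * s')" using x y nz by (simp add: field_simps)
  then show ?thesis using x y by (metis loc_intro Mprime Rdiff Rmul)
qed

lemma S_subring: "subring_of S"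
  using RS[OF R0] RS[OF R1] S_add S_mul S_diff by (auto simp: subring_of_def)

lemma C_S: "mloc R M \<subseteq> S"
  using MR by (auto simp: mloc_def localize_def)

lemma nak_inst: "nak S (mloc R M)"
proof
  show "addsub S" using RS[OF R0] S_add by (auto simp: addsub_def)
  show "\<forall>x\<in>S. \<forall>y\<in>S. x * y \<in> S" using S_mul by auto
  show "1 \<in> S" using RS[OF R1] .
  show "mloc R M \<subseteq> S" by (rule C_S)
  show "addsub (mloc R M)"
  proof -
    have "0 \<in> mloc R M" using mloc_intro[of 0 M 1 R] M0 R1 M1 by simp
    moreover have "x + y \<in> mloc R M" if xy: "x \<in> mloc R M" "y \<in> mloc R M" for x y
    proof -
      obtain a s b s' where x: "x = a / s" "a \<in> M" "s \<in> R" "s \<notin> M"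
        and y: "y = b / s'" "b \<in> M" "s' \<in> R" "s' \<notin> M"
        using xy by (auto simp: mloc_def)
      have "x + y = (s' * a + s * b) / (s * s')" using x y nz by (simp add: field_simps)
      then show ?thesis using x y by (metis mloc_intro Mprime Madd Mmul Rmul)
    qed
    ultimately show ?thesis by (simp add: addsub_def)
  qed
  show "\<forall>x\<in>S. \<forall>c\<in>mloc R M. x * c \<in> mloc R M"
  proof (intro ballI)
    fix x c assume xc: "x \<in> S" "c \<in> mloc R M"
    obtain a s b s' where x: "x = a / s" "a \<in> R" "s \<in> R" "s \<notin> M"
      and y: "c = b / s'" "b \<in> M" "s' \<in> R" "s' \<notin> M"
      using xc by (auto simp: mloc_def localize_def)
    have "x * c = (a * b) / (s * s')" using x y nz by (simp add: field_simps)
    then show "x * c \<in> mloc R M" using x y by (metis mloc_intro Mprime Mmul Rmul)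
  qed
  show "\<forall>c\<in>mloc R M. \<exists>e\<in>S. e * (1 - c) = 1"
  proof
    fix c assume "c \<in> mloc R M"
    then obtain b s' where y: "c = b / s'" "b \<in> M" "s' \<in> R" "s' \<notin> M"
      by (auto simp: mloc_def)
    have bR: "b \<in> R" using y MR by auto
    have d: "s' - b \<notin> M"
    proof
      assume "s' - b \<in> M"
      then have "(s' - b) + b \<in> M" using Madd y by blast
      then show False using y by simp
    qed
    have "s' / (s' - b) \<in> S" using loc_intro d y bR Rdiff by blast
    moreover have "s' / (s' - b) * (1 - c) = 1" using y nz[OF d] nz[OF y(4)]
      by (simp add: field_simps)
    ultimately show "\<exists>e\<in>S. e * (1 - c) = 1" by blast
  qed
qed

end

lemma key:
  assumes R: "subring_of R" and fr: "\<And>x. x \<in> frac_of R" and st: "straight R"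
    and M: "prime_ideal_of R M" and P: "prime_ideal_of R P" and PM: "P \<subseteq> M"
    and p: "p \<in> P" and t: "t \<in> R" "t \<notin> P"
  shows "p / t \<in> localize R M"
proof -
  interpret lsetup R M using R M by unfold_locales
  interpret nak S "mloc R M" by (rule nak_inst)
  have P0: "0 \<in> P" and P1: "1 \<notin> P" and PR: "P \<subseteq> R" and Pid: "ideal_of R P"
    using P by (auto simp: prime_ideal_of_def ideal_of_def)
  have PRmul: "r \<in> R \<Longrightarrow> x \<in> P \<Longrightarrow> r * x \<in> P" for r x
    using P by (simp add: prime_ideal_of_def ideal_of_def)
  have aP: "addsub P" using Pid by (rule ideal_addsub)
  have PC: "P \<subseteq> mloc R M"
  proof
    fix x assume "x \<in> P"
    then show "x \<in> mloc R M" using mloc_intro[of x M 1 R] PM R1 M1 by auto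
  qed
  show ?thesis
  proof (cases "p = 0")
    case True then show ?thesis using RS[OF R0] by simp
  next
    case False
    have t0: "t \<noteq> 0" using t P0 by auto
    define u where "u = p / t"
    define v where "v = t / p"
    have uv: "inverse u = v" by (simp add: u_def v_def)
    have u0: "u \<noteq> 0" using False t0 by (simp add: u_def)
    \<comment> \<open>relation from B = R[v]\<close>
    have "v * p = t * 1" using False by (simp add: v_def)
    then have "t * 1 \<in> ideal_ext P (Bset R v)"
      using ideal_ext_mult[OF p Bset_var[OF R]] by metis
    then have "1 \<in> ideal_ext P (Bset R v)"
      using st_use[OF st P Bset_overring[OF R fr] t(1) t(2) Bset_one[OF R]] by blast
    then have "1 \<in> Bset P v" using Bset_ideal[OF R Pid] by blast
    then obtain f where f: "1 = poly f v" "pc P f" unfolding Bset_def by blast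
    define d where "d = degree f"
    have d1: "d \<ge> 1"
    proof (rule ccontr)
      assume "\<not> d \<ge> 1"
      then have "degree f = 0" by (simp add: d_def)
      then have "poly f v = coeff f 0" using poly_altdef[of f v] by simp
      then show False using f P1 unfolding pc_def by metis
    qed
    have g1: "u ^ d = poly (reflect_poly f) u"
      using poly_reflect_poly_nz[OF u0, of f] f(1) uv by (simp add: d_def)
    have g2: "pc (mloc R M) (reflect_poly f)"
      using f(2) P0 PC by (auto simp: pc_def coeff_reflect_poly)
    have g3: "\<forall>i>d. coeff (reflect_poly f) i = 0"
      by (simp add: coeff_reflect_poly d_def)
    \<comment> \<open>relation from B = R[u]\<close>
    have "t * u = 1 * p" using t0 by (simp add: u_def)
    then have "t * u \<in> ideal_ext P (Bset R u)"
      using ideal_ext_mult[OF p Bset_one[OF R]] by metis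
    then have "u \<in> ideal_ext P (Bset R u)"
      using st_use[OF st P Bset_overring[OF R fr] t(1) t(2) Bset_var[OF R]] by blast
    then have "u \<in> Bset P u" using Bset_ideal[OF R Pid] by blast
    then obtain h1 where h1: "u = poly h1 u" "pc P h1" unfolding Bset_def by blast
    have H2: "\<forall>j. \<exists>h. pc (mloc R M) h \<and> u ^ Suc j = poly h u"
    proof
      fix j
      have "pc R (monom 1 j)" using R1 R0 by (rule pc_monom)
      then have "pc P (monom 1 j * h1)" using pc_mult[OF aP _ _ h1(2)] PRmul by blast
      moreover have "u ^ Suc j = poly (monom 1 j * h1) u"
        using h1(1) by (simp add: poly_monom mult.commute)
      ultimately show "\<exists>h. pc (mloc R M) h \<and> u ^ Suc j = poly h u"
        using pc_mono[OF PC] by blast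
    qed
    have "u \<in> S" using core[OF g1 g2 g3 d1 H2] .
    then show ?thesis by (simp add: u_def)
  qed
qed


lemma max_prime:
  assumes R: "subring_of R" and Mx: "maximal_ideal_of R M"
  shows "prime_ideal_of R M"
proof -
  have Mi: "ideal_of R M" and MneR: "M \<noteq> R"
    and mx: "\<And>I. ideal_of R I \<Longrightarrow> M \<subseteq> I \<Longrightarrow> I = M \<or> I = R"
    using Mx by (auto simp: maximal_ideal_of_def)
  have MR: "M \<subseteq> R" and Mmul: "\<And>r x. r \<in> R \<Longrightarrow> x \<in> M \<Longrightarrow> r * x \<in> M"
    and Madd: "\<And>x y. x \<in> M \<Longrightarrow> y \<in> M \<Longrightarrow> x + y \<in> M" and M0: "0 \<in> M"
    using Mi by (auto simp: ideal_of_def)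
  have R0: "0 \<in> R" and R1: "1 \<in> R" and Radd: "\<And>x y. x \<in> R \<Longrightarrow> y \<in> R \<Longrightarrow> x + y \<in> R"
    and Rmul: "\<And>x y. x \<in> R \<Longrightarrow> y \<in> R \<Longrightarrow> x * y \<in> R"
    using R by (auto simp: subring_of_def)
  have M1: "1 \<notin> M"
  proof
    assume "1 \<in> M"
    then have "R \<subseteq> M" using Mmul by (metis mult.right_neutral subsetI)
    then show False using MR MneR by blast
  qed
  have pr: "x \<in> M \<or> y \<in> M" if xy: "x \<in> R" "y \<in> R" "x * y \<in> M" for x y
  proof (rule ccontr)
    assume nn: "\<not> (x \<in> M \<or> y \<in> M)"
    define I where "I = {m + x * r | m r. m \<in> M \<and> r \<in> R}"
    have "ideal_of R I"
      unfolding ideal_of_def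
    proof (intro conjI ballI)
      show "I \<subseteq> R" using MR xy Radd Rmul by (auto simp: I_def)
      show "0 \<in> I" unfolding I_def using M0 R0 by force
    next
      fix a b assume "a \<in> I" "b \<in> I"
      then obtain m r m' r' where "a = m + x * r" "m \<in> M" "r \<in> R" "b = m' + x * r'" "m' \<in> M" "r' \<in> R"
        by (auto simp: I_def)
      then have "a + b = (m + m') + x * (r + r')" "m + m' \<in> M" "r + r' \<in> R"
        using Madd Radd by (auto simp: algebra_simps)
      then show "a + b \<in> I" unfolding I_def by blast
    next
      fix c a assume "c \<in> R" "a \<in> I"
      then obtain m r where "a = m + x * r" "m \<in> M" "r \<in> R" by (auto simp: I_def)
      then have "c * a = c * m + x * (c * r)" "c * m \<in> M" "c * r \<in> R"
        using Mmul Rmul \<open>c \<in> R\<close> by (auto simp: algebra_simps)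
      then show "c * a \<in> I" unfolding I_def by blast
    qed
    moreover have "M \<subseteq> I" unfolding I_def using R0 by force
    moreover have "x \<in> I" unfolding I_def using M0 R1 by force
    ultimately have "I = R" using mx nn by blast
    then have "1 \<in> I" using R1 by simp
    then obtain m r where mr: "1 = m + x * r" "m \<in> M" "r \<in> R" unfolding I_def by blast
    then have "y = y * m + r * (x * y)" by (metis distrib_left mult.commute mult.left_commute mult_1_right)
    then have "y \<in> M" using Mmul Madd mr xy by metis
    then show False using nn by blast
  qed
  show ?thesis using Mi M1 pr by (auto simp: prime_ideal_of_def)
qed

lemma ideal_ext_ge: "I \<subseteq> ideal_ext I B"
  by (auto simp: ideal_ext_def)

lemma divided_loc:
  assumes R: "subring_of R" and fr: "\<And>x. x \<in> frac_of R" and st: "straight R"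
    and M: "prime_ideal_of R M"
  shows "divided (localize R M)"
  unfolding divided_def
proof (intro allI impI)
  interpret lsetup R M using R M by unfold_locales
  fix Q assume Q: "prime_ideal_of S Q"
  have QS: "Q \<subseteq> S" and Q0: "0 \<in> Q" and Q1: "1 \<notin> Q"
    and Qadd: "\<And>x y. x \<in> Q \<Longrightarrow> y \<in> Q \<Longrightarrow> x + y \<in> Q"
    and Qmul: "\<And>r x. r \<in> S \<Longrightarrow> x \<in> Q \<Longrightarrow> r * x \<in> Q"
    and Qpr: "\<And>x y. x \<in> S \<Longrightarrow> y \<in> S \<Longrightarrow> x * y \<in> Q \<Longrightarrow> x \<in> Q \<or> y \<in> Q"
    using Q by (auto simp: prime_ideal_of_def ideal_of_def)
  have unitQ: "w \<in> R \<Longrightarrow> w \<notin> M \<Longrightarrow> w \<notin> Q" for w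
  proof
    assume w: "w \<in> R" "w \<notin> M" "w \<in> Q"
    have "1 / w \<in> S" using loc_intro R1 w by blast
    then have "(1 / w) * w \<in> Q" using Qmul w by blast
    then show False using nz[OF w(2)] Q1 by simp
  qed
  define P where "P = Q \<inter> R"
  have P: "prime_ideal_of R P"
    unfolding prime_ideal_of_def ideal_of_def P_def
  proof (intro conjI ballI impI)
    show "Q \<inter> R \<subseteq> R" by blast
    show "0 \<in> Q \<inter> R" using Q0 R0 by blast
    show "1 \<notin> Q \<inter> R" using Q1 by blast
  next
    fix x y assume "x \<in> Q \<inter> R" "y \<in> Q \<inter> R"
    then show "x + y \<in> Q \<inter> R" using Qadd Radd by blast
  next
    fix r x assume "r \<in> R" "x \<in> Q \<inter> R"
    then show "r * x \<in> Q \<inter> R" using Qmul[OF RS] Rmul by blast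
  next
    fix x y assume "x \<in> R" "y \<in> R" "x * y \<in> Q \<inter> R"
    then show "x \<in> Q \<inter> R \<or> y \<in> Q \<inter> R" using Qpr[OF RS RS] by blast
  qed
  have PM: "P \<subseteq> M" using unitQ by (auto simp: P_def)
  have divQ: "y / s \<in> Q" if ys: "y \<in> Q" "s \<in> S" "s \<notin> Q" for y s
  proof -
    obtain p w where x: "y = p / w" "p \<in> R" "w \<in> R" "w \<notin> M"
      using ys QS by (auto simp: localize_def)
    obtain t' w' where s: "s = t' / w'" "t' \<in> R" "w' \<in> R" "w' \<notin> M"
      using ys by (auto simp: localize_def)
    have w0: "w \<noteq> 0" "w' \<noteq> 0" using nz x s by auto
    have "p = w * y" using x w0 by simp
    then have pQ: "p \<in> Q" using Qmul[OF RS[OF x(3)] ys(1)] by simp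
    have tt: "t' = s * w'" using s w0 by simp
    have "t' \<notin> Q" using Qpr[OF ys(2) RS[OF s(3)]] ys(3) unitQ[OF s(3,4)] tt by auto
    then have t0: "t' \<noteq> 0" using Q0 by auto
    have "p / t' \<in> S" using key[OF R fr st M P PM] pQ x(2) s(2) \<open>t' \<notin> Q\<close> by (simp add: P_def)
    moreover have "w' / w \<in> S" using loc_intro s x by blast
    ultimately have "(p / t') * (w' / w) \<in> S" by (rule S_mul)
    moreover have "(p / t') * (w' / w) = y / s" unfolding x(1) s(1) using w0 t0 by (simp add: field_simps)
    ultimately have ysS: "y / s \<in> S" by simp
    have "s \<noteq> 0" using ys Q0 by auto
    then have "(y / s) * s \<in> Q" using ys by simp
    then show ?thesis using Qpr[OF ysS ys(2)] ys(3) by blast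
  qed
  have "ideal_of (localize S Q) Q"
    unfolding ideal_of_def
  proof (intro conjI ballI)
    show "Q \<subseteq> localize S Q"
    proof
      fix x assume "x \<in> Q"
      then show "x \<in> localize S Q" using loc_intro[of x S 1 Q] QS RS[OF R1] Q1 by auto
    qed
    show "0 \<in> Q" by (rule Q0)
  next
    fix x y assume "x \<in> Q" "y \<in> Q" then show "x + y \<in> Q" by (rule Qadd)
  next
    fix r x assume rx: "r \<in> localize S Q" "x \<in> Q"
    then obtain a s where a: "r = a / s" "a \<in> S" "s \<in> S" "s \<notin> Q" by (auto simp: localize_def)
    have "r * x = (a * x) / s" using a by simp
    moreover have "a * x \<in> Q" using Qmul a rx by blast
    ultimately show "r * x \<in> Q" using divQ a by simp
  qed
  then have "ideal_ext Q (localize S Q) \<subseteq> Q" by (rule ideal_ext_le) simp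
  then show "Q = ideal_ext Q (localize S Q)" using ideal_ext_ge by blast
qed

lemma range_subring: "subring_of (range (to_fract :: 'a::idom \<Rightarrow> 'a fract))"
  unfolding subring_of_def
proof (intro conjI ballI)
  show "0 \<in> range (to_fract :: 'a \<Rightarrow> 'a fract)" by (metis rangeI to_fract_0)
  show "1 \<in> range (to_fract :: 'a \<Rightarrow> 'a fract)" by (metis rangeI to_fract_1)
next
  fix x y assume "x \<in> range (to_fract :: 'a \<Rightarrow> 'a fract)" "y \<in> range (to_fract :: 'a \<Rightarrow> 'a fract)"
  then obtain a b where "x = to_fract a" "y = to_fract b" by blast
  then show "x + y \<in> range to_fract" "x - y \<in> range to_fract" "x * y \<in> range to_fract"
    by (metis rangeI to_fract_add, metis rangeI to_fract_diff, metis rangeI to_fract_mult)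
qed

lemma range_frac: "x \<in> frac_of (range (to_fract :: 'a::idom \<Rightarrow> 'a fract))"
proof (cases x)
  case (Fract a b)
  then have "x = to_fract a / to_fract b" "to_fract b \<noteq> 0" by (simp_all add: Fract_conv_to_fract)
  then show ?thesis unfolding frac_of_def by blast
qed

theorem corollary3p2:
  assumes "straight_domain TYPE('a::idom)"
  shows "locally_divided_domain TYPE('a)"
  using assms
  unfolding straight_domain_def locally_divided_domain_def locally_divided_def
  by (auto intro!: divided_loc range_subring range_frac max_prime)

end
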